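(* Let $w$ be a word over $\{L,R\}$ (an orbit pattern tag of an eventually fixed orbit). Then (1) $w$ forces each of its tails, i.e. every word $v'$ such that $w=vv'$ for some word $v$; and (2) every word $u$ forced by $w$ satisfies $|u|\le |w|$.
   Context: An interval map is a continuous map $f\colon I\to I$ on a compact interval $I=[a,b]$, $a<b$. Words are finite strings (including the empty word) over $\{L,R\}$; $|w|$ denotes the length of $w$. For $x\in I$ put $x_1=x$, $x_{j+1}=f(x_j)$. If $x$ is eventually fixed, let $n\ge 0$ be least such that $x_{n+1}$ is a fixed point of $f$; the orbit pattern tag of $x$ is the word of length $n$ whose $j$-th letter ($1\le j\le n$) is $L$ if $x_{j+1}<x_j$ and $R$ if $x_{j+1}>x_j$ (a fixed point has the empty word as tag). The map $f$ admits the tag $w$ if some point of $I$ has orbit pattern tag $w$. A word $w$ forces a word $u$ if every interval map admitting the tag $w$ also admits the tag $u$. *)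

theory Defs
  imports "HOL-Analysis.Analysis"
begin

datatype letter = L | R

type_synonym word = "letter list"

definition interval_map :: "real \<Rightarrow> real \<Rightarrow> (real \<Rightarrow> real) \<Rightarrow> bool" where
  "interval_map a b f \<longleftrightarrow> a < b \<and> continuous_on {a..b} f \<and> f ` {a..b} \<subseteq> {a..b}"

text \<open>Orbit: x_1 = x, x_{j+1} = f x_j, so x_{k+1} = (f ^^ k) x.
  The tag of x has length n, the least n with x_{n+1} fixed; its (k+1)-th letter
  (k < n) is L if x_{k+2} < x_{k+1} and R if x_{k+2} > x_{k+1}.\<close>
definition orbit_tag :: "(real \<Rightarrow> real) \<Rightarrow> real \<Rightarrow> word \<Rightarrow> bool" where
  "orbit_tag f x w \<longleftrightarrow>
     f ((f ^^ length w) x) = (f ^^ length w) x \<and>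
     (\<forall>k < length w. f ((f ^^ k) x) \<noteq> (f ^^ k) x) \<and>
     (\<forall>k < length w. (w ! k = L \<longleftrightarrow> (f ^^ Suc k) x < (f ^^ k) x) \<and>
                       (w ! k = R \<longleftrightarrow> (f ^^ Suc k) x > (f ^^ k) x))"

definition admits :: "real \<Rightarrow> real \<Rightarrow> (real \<Rightarrow> real) \<Rightarrow> word \<Rightarrow> bool" where
  "admits a b f w \<longleftrightarrow> (\<exists>x \<in> {a..b}. orbit_tag f x w)"

definition forces :: "word \<Rightarrow> word \<Rightarrow> bool" where
  "forces w u \<longleftrightarrow> (\<forall>(a::real) b f. interval_map a b f \<longrightarrow> admits a b f w \<longrightarrow> admits a b f u)"

end

theory Submission
  imports Defs
begin

lemma iter_agree:
  assumes "\<forall>y\<in>{a..b}. g y = f y" "f ` {a..b} \<subseteq> {a..b}" "y \<in> {a..b}"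
  shows "(g^^k) y = (f^^k) y \<and> (f^^k) y \<in> {a..b}"
  using assms by (induction k) (auto simp: image_subset_iff)

lemma tail_tag:
  assumes "orbit_tag f x (v @ v')"
  shows "orbit_tag f ((f^^length v) x) v'"
proof -
  have e: "(f^^k) ((f^^length v) x) = (f^^(k + length v)) x" for k
    by (simp add: funpow_add)
  have A: "f ((f^^length (v@v')) x) = (f^^length (v@v')) x"
    and B: "\<And>k. k < length (v@v') \<Longrightarrow> f ((f^^k) x) \<noteq> (f^^k) x"
    and C: "\<And>k. k < length (v@v') \<Longrightarrow> ((v@v') ! k = L \<longleftrightarrow> (f ^^ Suc k) x < (f ^^ k) x) \<and>
                       ((v@v') ! k = R \<longleftrightarrow> (f ^^ Suc k) x > (f ^^ k) x)"
    using assms unfolding orbit_tag_def by blast+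
  show ?thesis unfolding orbit_tag_def e
  proof (intro conjI allI impI)
    show "f ((f ^^ (length v' + length v)) x) = (f ^^ (length v' + length v)) x"
      using A by (simp add: add.commute)
  next
    fix k assume k: "k < length v'"
    then show "f ((f ^^ (k + length v)) x) \<noteq> (f ^^ (k + length v)) x" using B[of "k + length v"] by simp
    have "(v@v') ! (k + length v) = v' ! k" by (simp add: nth_append)
    then show "(v' ! k = L) = ((f ^^ (Suc k + length v)) x < (f ^^ (k + length v)) x)"
      and "(v' ! k = R) = ((f ^^ (k + length v)) x < (f ^^ (Suc k + length v)) x)"
      using C[of "k + length v"] k by simp_all
  qed
qed

lemma ext_map:
  fixes f g :: "real \<Rightarrow> real"
  assumes f': "interval_map a b f" "x \<in> {a..b}" "orbit_tag f x w"
      "\<forall>y\<in>{a..b}. f ((f^^length w) y) = (f^^length w) y"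
  and g: "a' \<le> a" "b \<le> b'" "continuous_on {a'..b'} g" "g ` {a'..b'} \<subseteq> {a..b}"
      "\<forall>y\<in>{a..b}. g y = f y" "q \<in> {a'..b'}" "q \<notin> {a..b}" "g q = x"
      "c = (if x < q then L else R)"
  shows "interval_map a' b' g \<and> q \<in> {a'..b'} \<and> orbit_tag g q (c#w) \<and>
     (\<forall>y\<in>{a'..b'}. g ((g^^length (c#w)) y) = (g^^length (c#w)) y)"
proof -
  have fI: "f ` {a..b} \<subseteq> {a..b}" using f'(1) unfolding interval_map_def by auto
  have ab: "a < b" using f'(1) unfolding interval_map_def by auto
  have H: "(g^^Suc k) y = (f^^k) (g y) \<and> (f^^k) (g y) \<in> {a..b}" if "y \<in> {a'..b'}" for k y
  proof -
    have "g y \<in> {a..b}" using g(4) that by (auto simp: image_subset_iff)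
    then show ?thesis using iter_agree[OF g(5) fI] by (simp add: funpow_Suc_right del: funpow.simps)
  qed
  have Hq: "(g^^Suc k) q = (f^^k) x \<and> (f^^k) x \<in> {a..b}" for k using H[OF g(6)] g(8) by simp
  have im: "interval_map a' b' g" unfolding interval_map_def using ab g by auto
  have xq: "x \<noteq> q" using f'(2) g(7) by auto
  have tag: "orbit_tag g q (c#w)"
    unfolding orbit_tag_def
  proof (intro conjI allI impI)
    show "g ((g ^^ length (c # w)) q) = (g ^^ length (c # w)) q"
      using Hq[of "length w"] g(5) f'(3) unfolding orbit_tag_def by simp
  next
    fix k assume k: "k < length (c#w)"
    show "g ((g ^^ k) q) \<noteq> (g ^^ k) q"
    proof (cases k)
      case 0 then show ?thesis using g(8) xq by simp
    next
      case (Suc j) then show ?thesis using Hq[of j] g(5) f'(3) k unfolding orbit_tag_def by simp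
    qed
  next
    fix k assume k: "k < length (c#w)"
    show "((c # w) ! k = L) = ((g ^^ Suc k) q < (g ^^ k) q)"
    proof (cases k)
      case 0 then show ?thesis using g(8) g(9) xq by auto
    next
      case (Suc j) then show ?thesis using Hq[of j] Hq[of "Suc j"] k f'(3) unfolding orbit_tag_def
        by (simp del: funpow.simps)
    qed
  next
    fix k assume k: "k < length (c#w)"
    show "((c # w) ! k = R) = ((g ^^ Suc k) q > (g ^^ k) q)"
    proof (cases k)
      case 0 then show ?thesis using g(8) g(9) xq by auto
    next
      case (Suc j) then show ?thesis using Hq[of j] Hq[of "Suc j"] k f'(3) unfolding orbit_tag_def
        by (simp del: funpow.simps)
    qed
  qed
  have dep: "\<forall>y\<in>{a'..b'}. g ((g^^length (c#w)) y) = (g^^length (c#w)) y"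
  proof
    fix y assume y: "y \<in> {a'..b'}"
    have "g y \<in> {a..b}" using g(4) y by (auto simp: image_subset_iff)
    then show "g ((g^^length (c#w)) y) = (g^^length (c#w)) y"
      using H[OF y, of "length w"] f'(4) g(5) by simp
  qed
  show ?thesis using im g(6) tag dep by blast
qed

lemma exists_map:
  "\<exists>a b f x. interval_map a b f \<and> x \<in> {a..b} \<and> orbit_tag f x w \<and>
     (\<forall>y\<in>{a..b}. f ((f^^length w) y) = (f^^length w) y)"
proof (induction w)
  case Nil
  show ?case
    by (rule exI[of _ 0], rule exI[of _ 1], rule exI[of _ "\<lambda>y. y"], rule exI[of _ 0])
      (simp add: interval_map_def orbit_tag_def)
next
  case (Cons c w)
  then obtain a b f x where f': "interval_map a b f" "x \<in> {a..b}" "orbit_tag f x w"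
      "\<forall>y\<in>{a..b}. f ((f^^length w) y) = (f^^length w) y" by blast
  have fI: "f ` {a..b} \<subseteq> {a..b}" and fc: "continuous_on {a..b} f" and ab: "a < b"
    using f'(1) unfolding interval_map_def by auto
  show ?case
  proof (cases c)
    case L
    define g where "g = (\<lambda>y. if y \<le> b then f y else f b + (y - b) * (x - f b))"
    have fb: "f b \<in> {a..b}" using fI ab by (auto simp: image_subset_iff)
    have cont: "continuous_on {a..b+1} g"
    proof -
      have "continuous_on ({a..b} \<union> {b..b+1}) g"
        unfolding g_def
        by (rule continuous_on_cases) (auto intro!: continuous_intros fc)
      moreover have "{a..b} \<union> {b..b+1} = {a..b+1}" using ab by auto
      ultimately show ?thesis by simp
    qed
    have img: "g ` {a..b+1} \<subseteq> {a..b}"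
    proof
      fix z assume "z \<in> g ` {a..b+1}"
      then obtain y where y: "y \<in> {a..b+1}" "z = g y" by auto
      show "z \<in> {a..b}"
      proof (cases "y \<le> b")
        case True then show ?thesis using y fI by (auto simp: g_def image_subset_iff)
      next
        case False
        define t where "t = y - b"
        have t: "0 \<le> t" "t \<le> 1" using False y unfolding t_def by auto
        have z: "z = (1 - t) * f b + t * x" using False y unfolding g_def t_def by (simp add: algebra_simps)
        have "(1 - t) * a + t * a \<le> (1 - t) * f b + t * x"
          using t fb f'(2) by (intro add_mono mult_left_mono) auto
        moreover have "(1 - t) * f b + t * x \<le> (1 - t) * b + t * b"
          using t fb f'(2) by (intro add_mono mult_left_mono) auto
        ultimately show ?thesis using z by (simp add: algebra_simps)
      qed
    qed
    have r: "interval_map a (b+1) g \<and> b+1 \<in> {a..b+1} \<and> orbit_tag g (b+1) (L#w) \<and>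
     (\<forall>y\<in>{a..b+1}. g ((g^^length (L#w)) y) = (g^^length (L#w)) y)"
      by (rule ext_map[OF f'(1) f'(2) f'(3) f'(4)]) (use cont img f'(2) ab in \<open>auto simp: g_def\<close>)
    then show ?thesis using L by blast
  next
    case R
    define g where "g = (\<lambda>y. if y \<ge> a then f y else f a + (a - y) * (x - f a))"
    have fa: "f a \<in> {a..b}" using fI ab by (auto simp: image_subset_iff)
    have cont: "continuous_on {a-1..b} g"
    proof -
      have "continuous_on ({a..b} \<union> {a-1..a}) g"
        unfolding g_def
        by (rule continuous_on_cases) (auto intro!: continuous_intros fc)
      moreover have "{a..b} \<union> {a-1..a} = {a-1..b}" using ab by auto
      ultimately show ?thesis by simp
    qed
    have img: "g ` {a-1..b} \<subseteq> {a..b}"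
    proof
      fix z assume "z \<in> g ` {a-1..b}"
      then obtain y where y: "y \<in> {a-1..b}" "z = g y" by auto
      show "z \<in> {a..b}"
      proof (cases "y \<ge> a")
        case True then show ?thesis using y fI by (auto simp: g_def image_subset_iff)
      next
        case False
        define t where "t = a - y"
        have t: "0 \<le> t" "t \<le> 1" using False y unfolding t_def by auto
        have z: "z = (1 - t) * f a + t * x" using False y unfolding g_def t_def by (simp add: algebra_simps)
        have "(1 - t) * a + t * a \<le> (1 - t) * f a + t * x"
          using t fa f'(2) by (intro add_mono mult_left_mono) auto
        moreover have "(1 - t) * f a + t * x \<le> (1 - t) * b + t * b"
          using t fa f'(2) by (intro add_mono mult_left_mono) auto
        ultimately show ?thesis using z by (simp add: algebra_simps)
      qed
    qed
    have r: "interval_map (a-1) b g \<and> a-1 \<in> {a-1..b} \<and> orbit_tag g (a-1) (R#w) \<and>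
     (\<forall>y\<in>{a-1..b}. g ((g^^length (R#w)) y) = (g^^length (R#w)) y)"
      by (rule ext_map[OF f'(1) f'(2) f'(3) f'(4)]) (use cont img f'(2) ab in \<open>auto simp: g_def\<close>)
    then show ?thesis using R by blast
  qed
qed

theorem mainTheorem2:
  fixes w :: word
  shows "(\<forall>v v'. w = v @ v' \<longrightarrow> forces w v') \<and> (\<forall>u. forces w u \<longrightarrow> length u \<le> length w)"
proof (intro conjI allI impI)
  fix v v' assume w: "w = v @ v'"
  show "forces w v'" unfolding forces_def admits_def
  proof (intro allI impI)
    fix a b :: real and f
    assume im: "interval_map a b f" and "\<exists>x\<in>{a..b}. orbit_tag f x w"
    then obtain x where x: "x \<in> {a..b}" "orbit_tag f x (v @ v')" using w by blast
    have fI: "f ` {a..b} \<subseteq> {a..b}" using im unfolding interval_map_def by auto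
    have "(f^^k) x \<in> {a..b}" for k using iter_agree[of a b f f x k] fI x(1) by auto
    then show "\<exists>x\<in>{a..b}. orbit_tag f x v'" using tail_tag[OF x(2)] by blast
  qed
next
  fix u assume fu: "forces w u"
  obtain a b f x where f: "interval_map a b f" "x \<in> {a..b}" "orbit_tag f x w"
      "\<forall>y\<in>{a..b}. f ((f^^length w) y) = (f^^length w) y" using exists_map by blast
  have "admits a b f u" using fu f unfolding forces_def admits_def by blast
  then obtain y where y: "y \<in> {a..b}" "orbit_tag f y u" unfolding admits_def by blast
  show "length u \<le> length w"
  proof (rule ccontr)
    assume "\<not> length u \<le> length w"
    then have "f ((f^^length w) y) \<noteq> (f^^length w) y" using y(2) unfolding orbit_tag_def by auto
    then show False using f(4) y(1) by blast
  qed
qed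

end
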